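(* Let $P$ be a Poisson tensor on $\mathbb{R}^3$, let $H\in C^\infty(\mathbb{R}^3)$, let $S\in C^\infty(\mathbb{R}^3)$ satisfy $PdS=0$, and let $g$ be the symmetric tensor with components $g^{ij}=H^iH^j-\delta^{ij}\sum_k H^kH^k$. If $x$ is a regular equilibrium of the system $\dot{x}=PdH+gdS$, then either $x$ is a critical point of $H$, or the level sets of $S$ and of $H$ through $x$ are tangent to each other at $x$.
   Context: $\mathbb{R}^3$ carries the standard Euclidean metric, used to identify tangent and cotangent spaces with $\mathbb{R}^3$; $H^i=H_i=\partial H/\partial x^i$. A Poisson tensor is a skew-symmetric bivector field satisfying the Jacobi identity. A regular equilibrium is an equilibrium point $x$ with $P(x)\neq 0$. *)

theory Defs
  imports "HOL-Analysis.Analysis"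
begin

definition pd :: "3 \<Rightarrow> (real^3 \<Rightarrow> real) \<Rightarrow> real^3 \<Rightarrow> real" where
  "pd i f x = deriv (\<lambda>t. f (x + t *\<^sub>R axis i 1)) 0"

text \<open>Gradient (= dH under the Euclidean identification), H^i = H_i = partial H / partial x^i.\<close>
definition grad :: "(real^3 \<Rightarrow> real) \<Rightarrow> real^3 \<Rightarrow> real^3" where
  "grad f x = (\<chi> i. pd i f x)"

text \<open>C-infinity: f is continuous and all partial derivatives exist everywhere and are
  again C-infinity (coinductively, i.e. partial derivatives of every order exist and are continuous).\<close>
coinductive smooth :: "(real^3 \<Rightarrow> real) \<Rightarrow> bool" where
  "\<lbrakk> continuous_on UNIV f;
     \<forall>i x. ((\<lambda>t. f (x + t *\<^sub>R axis i 1)) has_real_derivative D i x) (at 0);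
     \<forall>i. smooth (D i) \<rbrakk> \<Longrightarrow> smooth f"

definition poisson_tensor :: "(real^3 \<Rightarrow> real^3^3) \<Rightarrow> bool" where
  "poisson_tensor P \<longleftrightarrow>
     (\<forall>i j. smooth (\<lambda>x. P x $ i $ j)) \<and>
     (\<forall>x i j. P x $ i $ j = - (P x $ j $ i)) \<and>
     (\<forall>x i j k. (\<Sum>l\<in>UNIV.
         P x $ i $ l * pd l (\<lambda>y. P y $ j $ k) x
       + P x $ j $ l * pd l (\<lambda>y. P y $ k $ i) x
       + P x $ k $ l * pd l (\<lambda>y. P y $ i $ j) x) = 0)"

definition gmat :: "(real^3 \<Rightarrow> real) \<Rightarrow> real^3 \<Rightarrow> real^3^3" where
  "gmat H x = (\<chi> i j. grad H x $ i * grad H x $ j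
       - (if i = j then 1 else 0) * (\<Sum>k\<in>UNIV. grad H x $ k * grad H x $ k))"

definition metriplectic_field ::
  "(real^3 \<Rightarrow> real^3^3) \<Rightarrow> (real^3 \<Rightarrow> real) \<Rightarrow> (real^3 \<Rightarrow> real) \<Rightarrow> real^3 \<Rightarrow> real^3" where
  "metriplectic_field P H S x = P x *v grad H x + gmat H x *v grad S x"

end

theory Submission
  imports Defs
begin

lemma core:
  fixes a b c u1 u2 u3 h1 h2 h3 :: real
  assumes p: "a\<noteq>0 \<or> b\<noteq>0 \<or> c\<noteq>0"
  and e1: "a* u2 + b* u3 = 0" and e2: "-a* u1 + c* u3 = 0" and e3: "-b* u1 - c* u2 = 0"
  and f1: "a*h2 + b*h3 + h1*(h1* u1+h2* u2+h3* u3) - (h1*h1+h2*h2+h3*h3)* u1 = 0"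
  and f2: "-a*h1 + c*h3 + h2*(h1* u1+h2* u2+h3* u3) - (h1*h1+h2*h2+h3*h3)* u2 = 0"
  and f3: "-b*h1 - c*h2 + h3*(h1* u1+h2* u2+h3* u3) - (h1*h1+h2*h2+h3*h3)* u3 = 0"
  shows "(h1=0\<and>h2=0\<and>h3=0) \<or> (\<exists>k. u1 = k*h1 \<and> u2 = k*h2 \<and> u3=k*h3)"
proof -
  define N where "N = c*c+b*b+a*a"
  define sp where "sp = c* u1 - b* u2 + a* u3"
  define hp where "hp = c*h1 - b*h2 + a*h3"
  have q: "0 \<le> a*a" "0 \<le> b*b" "0 \<le> c*c" by simp_all
  have "a*a>0 \<or> b*b>0 \<or> c*c>0" using p by (metis not_real_square_gt_zero)
  then have Npos: "N > 0" using q unfolding N_def by linarith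
  have ps1: "N* u1 = sp*c" and ps2: "N* u2 = sp*(-b)" and ps3: "N* u3 = sp*a"
    using e1 e2 e3 unfolding N_def sp_def by algebra+
  have k1: "hp*(h1* u1+h2* u2+h3* u3) - (h1*h1+h2*h2+h3*h3)* sp = 0"
    using f1 f2 f3 unfolding hp_def sp_def by algebra
  have k3: "N*(h1* u1+h2* u2+h3* u3) = sp*hp"
    using ps1 ps2 ps3 unfolding hp_def by algebra
  have key: "sp*(hp*hp - (h1*h1+h2*h2+h3*h3)*N) = 0"
    using k1 k3 by algebra
  show ?thesis
  proof (cases "sp = 0")
    case True
    then have "u1 = 0" "u2 = 0" "u3 = 0" using ps1 ps2 ps3 Npos by auto
    then show ?thesis by auto
  next
    case False
    with key have k2: "hp*hp = (h1*h1+h2*h2+h3*h3)*N" by simp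
    have lag: "(h1*h1+h2*h2+h3*h3)*N - hp*hp = (h2*a+h3*b)^2 + (h3*c-h1*a)^2 + (h1*b+h2*c)^2"
      unfolding N_def hp_def by algebra
    have "(h2*a+h3*b)^2 + (h3*c-h1*a)^2 + (h1*b+h2*c)^2 = 0" using lag k2 by simp
    then have c1: "h2*a+h3*b = 0" and c2: "h3*c-h1*a = 0" and c3: "h1*b+h2*c = 0"
      by (smt (verit) zero_le_power2 sum_power2_eq_zero_iff)+
    have ph1: "N*h1 = hp*c" and ph2: "N*h2 = hp*(-b)" and ph3: "N*h3 = hp*a"
      using c1 c2 c3 unfolding N_def hp_def by algebra+
    show ?thesis
    proof (cases "hp = 0")
      case True
      then show ?thesis using ph1 ph2 ph3 Npos by auto
    next
      case hpnz: False
      have "u1 = (sp/hp)*h1 \<and> u2 = (sp/hp)*h2 \<and> u3 = (sp/hp)*h3"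
        using ps1 ps2 ps3 ph1 ph2 ph3 Npos hpnz
        by (smt (verit) divide_cancel_right mult.commute nonzero_mult_div_cancel_left times_divide_eq_left)
      then show ?thesis by blast
    qed
  qed
qed

theorem mainTheorem5:
  fixes P :: "real^3 \<Rightarrow> real^3^3" and H S :: "real^3 \<Rightarrow> real" and x :: "real^3"
  assumes "poisson_tensor P"
    and "smooth H" and "smooth S"
    and "\<forall>y. P y *v grad S y = 0"
    and "metriplectic_field P H S x = 0"
    and "P x \<noteq> 0"
  shows "grad H x = 0 \<or> (\<exists>c. grad S x = c *\<^sub>R grad H x)"
proof -
  have skew: "\<And>i j. P x $ i $ j = - (P x $ j $ i)" using assms(1) unfolding poisson_tensor_def by blast
  have d: "\<And>i. P x $ i $ i = 0" using skew by (metis add.inverse_unique add_eq_0_iff2 equation_minus_iff neg_equal_zero)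
  define a where "a = P x $ 1 $ 2"
  define b where "b = P x $ 1 $ 3"
  define c where "c = P x $ 2 $ 3"
  have s21: "P x $ 2 $ 1 = -a" "P x $ 3 $ 1 = -b" "P x $ 3 $ 2 = -c"
    unfolding a_def b_def c_def using skew by (metis minus_minus)+
  have pnz: "a\<noteq>0 \<or> b\<noteq>0 \<or> c\<noteq>0"
  proof (rule ccontr)
    assume "\<not> ?thesis"
    then have "P x = 0" using d s21 unfolding a_def b_def c_def
      by (simp add: vec_eq_iff forall_3)
    with assms(6) show False by simp
  qed
  define u1 where "u1 = grad S x $ 1"
  define u2 where "u2 = grad S x $ 2"
  define u3 where "u3 = grad S x $ 3"
  define h1 where "h1 = grad H x $ 1"
  define h2 where "h2 = grad H x $ 2"
  define h3 where "h3 = grad H x $ 3"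
  have PS: "P x *v grad S x = 0" using assms(4) by blast
  have e: "a* u2 + b* u3 = 0" "-a* u1 + c* u3 = 0" "-b* u1 - c* u2 = 0"
    using PS d s21 unfolding a_def b_def c_def u1_def u2_def u3_def
    by (simp_all add: vec_eq_iff forall_3 sum_3 matrix_vector_mult_def)
  have f: "a*h2 + b*h3 + h1*(h1* u1+h2* u2+h3* u3) - (h1*h1+h2*h2+h3*h3)* u1 = 0"
     "-a*h1 + c*h3 + h2*(h1* u1+h2* u2+h3* u3) - (h1*h1+h2*h2+h3*h3)* u2 = 0"
     "-b*h1 - c*h2 + h3*(h1* u1+h2* u2+h3* u3) - (h1*h1+h2*h2+h3*h3)* u3 = 0"
    using assms(5) d s21 unfolding a_def b_def c_def u1_def u2_def u3_def h1_def h2_def h3_def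
    by (simp_all add: metriplectic_field_def gmat_def vec_eq_iff forall_3 sum_3 matrix_vector_mult_def algebra_simps)
  have "(h1=0\<and>h2=0\<and>h3=0) \<or> (\<exists>k. u1 = k*h1 \<and> u2 = k*h2 \<and> u3=k*h3)"
    using core[OF pnz e f] .
  then show ?thesis
    unfolding u1_def u2_def u3_def h1_def h2_def h3_def
    by (auto simp: vec_eq_iff forall_3)
qed

end
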